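(* In the model described in the context, let $(q^*_{BHM},G^*_{BHM})$ be the optimal outcome of the relaxed problem described there, consisting of an $N$-item menu $\{(0,0),(q_1^*,t_1^* ),\dots,(q_N^*,t_N^* )\}$ and the distribution $G^*_{BHM}$ that pools types in the intervals $[0,v_1^*],[v_1^*,v_2^*],\dots,[v_N^*,1]$ at their conditional means, with $w_i^*=\mathbb{E}(\theta\mid v_i^*\le\theta\le v_{i+1}^* )$ for $i=1,\dots,N$ (where $v_{N+1}^*:=1$). Define $\hat b:=\max\{w_1^*-v_1^*,\dots,w_N^*-v_N^*\}$. If $b<\hat b$, then $(q^*_{BHM},G^*_{BHM})$ does not satisfy the (I-OB) constraint and therefore is not a solution to the monopolist's problem.
   Context: A monopolist sells goods of quality $q\in[0,\bar q]$ (fixed $\bar q>0$) to a buyer. The buyer's value $\theta\in[0,1]$ is drawn from a CDF $F_0$ with density $f_0>0$ on $[0,1]$; $F_0$ has increasing hazard rate. Neither the monopolist nor the buyer knows $\theta$. Cost $c:\mathbb{R}_+\to\mathbb{R}_+$ is strictly increasing, continuously differentiable and strictly convex. A menu is a set of items $(q,t)\in[0,\bar q]\times\mathbb{R}_+$ containing $(0,0)$. Buyer utility from $(q,t)$ is $\theta q-t$; an intermediary with commonly known bias $b\ge0$ has utility $(\theta+b)q-t$. Timing: monopolist posts a menu; intermediary commits to a signal about $\theta$; buyer observes realization and picks an item. Payoffs depend only on the posterior mean $w=\mathbb{E}[\theta\mid s]$; a signal is identified with the CDF $G$ of $w$, and feasible $G$ form $MPC(F_0)=\{G \text{ CDF on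 }[0,1]: \int_0^x(F_0-G)\ge0\ \forall x,\ \text{equality at }x=1\}$. Buyer indifferences are broken toward higher quality and toward participation. A mechanism is $q:[0,1]\to[0,\bar q]$, $t:[0,1]\to\mathbb{R}_+$. The monopolist's problem: maximize $\int_0^1[t(w)-c(q(w))]\,dG(w)$ over $(q,t)$ and $G\in MPC(F_0)$ subject to (B-IC) $wq(w)-t(w)\ge wq(w')-t(w')$ for all $w,w'$; (B-IR) $wq(w)-t(w)\ge0$; (I-OB) $G\in\arg\max_{H\in MPC(F_0)}\int[(w+b)q(w)-t(w)]\,dH(w)$. The relaxed problem is the same problem without (I-OB) (the monopolist chooses the information directly). Its optimal $N$-item outcome is obtained by choosing cutoffs $v_1\le\dots\le v_N$ and qualities $q_1,\dots,q_N$ to maximize $\sum_{i=1}^{N-1}(F_0(v_{i+1})-F_0(v_i))(t_i-c(q_i))+(1-F_0(v_N))(t_N-c(q_N))$, where $w_i=\mathbb{E}(\theta\mid v_i\le\theta\le v_{i+1})$ ($v_{N+1}=1$), $t_1=w_1q_1$, and $t_i=t_{i-1}+w_i(q_i-q_{i-1})$ for $i=2,\dots,N$; the optimal values are $v_i^*,q_i^*,t_i^*,w_i^*$. *)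

theory Defs
  imports "HOL-Analysis.Analysis"
begin

definition prior :: "(real \<Rightarrow> real) \<Rightarrow> (real \<Rightarrow> real) \<Rightarrow> bool" where
  "prior F0 f0 \<longleftrightarrow>
     f0 integrable_on {0..1} \<and>
     (\<forall>x\<in>{0..1}. f0 x > 0) \<and>
     (\<forall>x\<in>{0..1}. F0 x = integral {0..x} f0) \<and>
     (\<forall>x<0. F0 x = 0) \<and> (\<forall>x\<ge>1. F0 x = 1) \<and>
     mono_on {0..<1} (\<lambda>x. f0 x / (1 - F0 x))"

definition cost_fun :: "(real \<Rightarrow> real) \<Rightarrow> bool" where
  "cost_fun c \<longleftrightarrow>
     (\<forall>x\<ge>0. c x \<ge> 0) \<and>
     strict_mono_on {0..} c \<and>
     (\<exists>c'. (\<forall>x\<ge>0. (c has_real_derivative c' x) (at x within {0..})) \<and> continuous_on {0..} c') \<and>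
     (\<forall>x\<ge>0. \<forall>y\<ge>0. \<forall>u. x \<noteq> y \<and> 0 < u \<and> u < 1 \<longrightarrow>
        c (u * x + (1 - u) * y) < u * c x + (1 - u) * c y)"

definition cdf01 :: "(real \<Rightarrow> real) \<Rightarrow> bool" where
  "cdf01 G \<longleftrightarrow> mono G \<and> (\<forall>x. continuous (at_right x) G) \<and>
     (\<forall>x<0. G x = 0) \<and> (\<forall>x\<ge>1. G x = 1)"

definition MPC :: "(real \<Rightarrow> real) \<Rightarrow> (real \<Rightarrow> real) set" where
  "MPC F0 = {G. cdf01 G \<and>
     (\<forall>x. integral {0..x} (\<lambda>s. F0 s - G s) \<ge> 0) \<and>
     integral {0..1} (\<lambda>s. F0 s - G s) = 0}"

definition integral_cdf :: "(real \<Rightarrow> real) \<Rightarrow> (real \<Rightarrow> real) \<Rightarrow> real" where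
  "integral_cdf G \<phi> = integral\<^sup>L (interval_measure G) \<phi>"

definition I_OB :: "(real \<Rightarrow> real) \<Rightarrow> real \<Rightarrow> (real \<Rightarrow> real) \<Rightarrow> (real \<Rightarrow> real)
    \<Rightarrow> (real \<Rightarrow> real) \<Rightarrow> bool" where
  "I_OB F0 b q t G \<longleftrightarrow> G \<in> MPC F0 \<and>
     (\<forall>H\<in>MPC F0. integral_cdf H (\<lambda>w. (w + b) * q w - t w)
                  \<le> integral_cdf G (\<lambda>w. (w + b) * q w - t w))"

definition B_IC :: "(real \<Rightarrow> real) \<Rightarrow> (real \<Rightarrow> real) \<Rightarrow> bool" where
  "B_IC q t \<longleftrightarrow> (\<forall>w\<in>{0..1}. \<forall>w'\<in>{0..1}. w * q w - t w \<ge> w * q w' - t w')"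

definition B_IR :: "(real \<Rightarrow> real) \<Rightarrow> (real \<Rightarrow> real) \<Rightarrow> bool" where
  "B_IR q t \<longleftrightarrow> (\<forall>w\<in>{0..1}. w * q w - t w \<ge> 0)"

definition feasible :: "(real \<Rightarrow> real) \<Rightarrow> real \<Rightarrow> real \<Rightarrow> (real \<Rightarrow> real) \<Rightarrow> (real \<Rightarrow> real)
    \<Rightarrow> (real \<Rightarrow> real) \<Rightarrow> bool" where
  "feasible F0 qbar b q t G \<longleftrightarrow>
     (\<forall>w\<in>{0..1}. 0 \<le> q w \<and> q w \<le> qbar \<and> 0 \<le> t w) \<and>
     B_IC q t \<and> B_IR q t \<and> G \<in> MPC F0 \<and> I_OB F0 b q t G"

definition monopolist_solution :: "(real \<Rightarrow> real) \<Rightarrow> (real \<Rightarrow> real) \<Rightarrow> real \<Rightarrow> real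
    \<Rightarrow> (real \<Rightarrow> real) \<Rightarrow> (real \<Rightarrow> real) \<Rightarrow> (real \<Rightarrow> real) \<Rightarrow> bool" where
  "monopolist_solution F0 c qbar b q t G \<longleftrightarrow> feasible F0 qbar b q t G \<and>
     (\<forall>q' t' G'. feasible F0 qbar b q' t' G' \<longrightarrow>
        integral_cdf G' (\<lambda>w. t' w - c (q' w)) \<le> integral_cdf G (\<lambda>w. t w - c (q w)))"

text \<open>E(theta | a <= theta <= b); for a degenerate interval a = b we use the limit value a.\<close>
definition cond_mean :: "(real \<Rightarrow> real) \<Rightarrow> real \<Rightarrow> real \<Rightarrow> real" where
  "cond_mean f0 a b' = (if a < b' then integral {a..b'} (\<lambda>\<theta>. \<theta> * f0 \<theta>) / integral {a..b'} f0 else a)"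

text \<open>Cutoffs v 1, ..., v N (indices 1..N), with v (N+1) := 1.\<close>
definition vext :: "nat \<Rightarrow> (nat \<Rightarrow> real) \<Rightarrow> nat \<Rightarrow> real" where
  "vext N v i = (if i = N + 1 then 1 else v i)"

definition wpool :: "(real \<Rightarrow> real) \<Rightarrow> nat \<Rightarrow> (nat \<Rightarrow> real) \<Rightarrow> nat \<Rightarrow> real" where
  "wpool f0 N v i = cond_mean f0 (v i) (vext N v (i + 1))"

definition qext :: "(nat \<Rightarrow> real) \<Rightarrow> nat \<Rightarrow> real" where
  "qext q i = (if i = 0 then 0 else q i)"

definition price :: "(real \<Rightarrow> real) \<Rightarrow> nat \<Rightarrow> (nat \<Rightarrow> real) \<Rightarrow> (nat \<Rightarrow> real) \<Rightarrow> nat \<Rightarrow> real" where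
  "price f0 N v q i = (\<Sum>j=1..i. wpool f0 N v j * (qext q j - qext q (j - 1)))"

definition nitem_objective :: "(real \<Rightarrow> real) \<Rightarrow> (real \<Rightarrow> real) \<Rightarrow> (real \<Rightarrow> real) \<Rightarrow> nat
    \<Rightarrow> (nat \<Rightarrow> real) \<Rightarrow> (nat \<Rightarrow> real) \<Rightarrow> real" where
  "nitem_objective F0 f0 c N v q =
     (\<Sum>i=1..N-1. (F0 (v (i + 1)) - F0 (v i)) * (price f0 N v q i - c (q i)))
     + (1 - F0 (v N)) * (price f0 N v q N - c (q N))"

definition nitem_feasible :: "real \<Rightarrow> nat \<Rightarrow> (nat \<Rightarrow> real) \<Rightarrow> (nat \<Rightarrow> real) \<Rightarrow> bool" where
  "nitem_feasible qbar N v q \<longleftrightarrow>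
     (\<forall>i\<in>{1..N}. 0 \<le> v i \<and> v i \<le> 1 \<and> 0 \<le> q i \<and> q i \<le> qbar) \<and>
     (\<forall>i\<in>{1..<N}. v i \<le> v (i + 1))"

text \<open>Item chosen by a buyer with posterior mean w from the menu (items 0..N, item 0 = (0,0)):
  a utility maximiser, ties broken toward higher quality (q strictly increasing in the index,
  so highest quality = highest index).\<close>
definition choice :: "(real \<Rightarrow> real) \<Rightarrow> nat \<Rightarrow> (nat \<Rightarrow> real) \<Rightarrow> (nat \<Rightarrow> real) \<Rightarrow> real \<Rightarrow> nat" where
  "choice f0 N v q w = (GREATEST j. j \<le> N \<and>
     (\<forall>k\<le>N. w * qext q k - price f0 N v q k \<le> w * qext q j - price f0 N v q j))"

definition mech_q :: "(real \<Rightarrow> real) \<Rightarrow> nat \<Rightarrow> (nat \<Rightarrow> real) \<Rightarrow> (nat \<Rightarrow> real) \<Rightarrow> real \<Rightarrow> real" where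
  "mech_q f0 N v q w = qext q (choice f0 N v q w)"

definition mech_t :: "(real \<Rightarrow> real) \<Rightarrow> nat \<Rightarrow> (nat \<Rightarrow> real) \<Rightarrow> (nat \<Rightarrow> real) \<Rightarrow> real \<Rightarrow> real" where
  "mech_t f0 N v q w = price f0 N v q (choice f0 N v q w)"

definition G_BHM :: "(real \<Rightarrow> real) \<Rightarrow> (real \<Rightarrow> real) \<Rightarrow> nat \<Rightarrow> (nat \<Rightarrow> real) \<Rightarrow> real \<Rightarrow> real" where
  "G_BHM F0 f0 N v x =
     (if cond_mean f0 0 (v 1) \<le> x then F0 (v 1) else 0) +
     (\<Sum>i=1..N. if wpool f0 N v i \<le> x then F0 (vext N v (i + 1)) - F0 (v i) else 0)"

definition b_hat :: "(real \<Rightarrow> real) \<Rightarrow> nat \<Rightarrow> (nat \<Rightarrow> real) \<Rightarrow> real" where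
  "b_hat f0 N v = Max ((\<lambda>i. wpool f0 N v i - v i) ` {1..N})"

end

theory Submission
  imports Defs "HOL-Probability.Probability"
begin


definition stepsum :: "nat \<Rightarrow> (nat \<Rightarrow> real) \<Rightarrow> (nat \<Rightarrow> real) \<Rightarrow> real \<Rightarrow> real" where
  "stepsum n A W x = (\<Sum>k<n. if A k \<le> x then W k else 0)"

lemma sum_list_swap_aux:
  fixes g :: "'a \<Rightarrow> 'b \<Rightarrow> real"
  shows "(\<Sum>a\<in>S. sum_list (map (g a) xs)) = sum_list (map (\<lambda>z. \<Sum>a\<in>S. g a z) xs)"
  by (induction xs) (auto simp: sum.distrib)

lemma integral_pmf_of_list:
  fixes xs :: "(real \<times> real) list"
  assumes wf: "pmf_of_list_wf xs"
  shows "(\<integral>x. f x \<partial>measure_pmf (pmf_of_list xs)) = sum_list (map (\<lambda>z. snd z * f (fst z)) xs)"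
proof -
  have "(\<integral>x. f x \<partial>measure_pmf (pmf_of_list xs)) = (\<Sum>a\<in>set (map fst xs). f a * pmf (pmf_of_list xs) a)"
    using set_pmf_of_list[OF wf] by (intro integral_measure_pmf_real) auto
  also have "\<dots> = (\<Sum>a\<in>set (map fst xs). sum_list (map (\<lambda>z. if fst z = a then snd z * f a else 0) xs))"
    by (simp add: pmf_pmf_of_list[OF wf] sum_list_map_filter' sum_list_const_mult[symmetric] mult.commute if_distrib cong: if_cong)
  also have "\<dots> = sum_list (map (\<lambda>z. \<Sum>a\<in>set (map fst xs). if fst z = a then snd z * f a else 0) xs)"
    by (rule sum_list_swap_aux)
  also have "\<dots> = sum_list (map (\<lambda>z. snd z * f (fst z)) xs)"
    by (intro arg_cong[where f=sum_list] map_cong refl) (auto simp: sum.delta)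
  finally show ?thesis .
qed

lemma step_right_cont:
  fixes c w :: real
  shows "continuous (at_right x) (\<lambda>y. if c \<le> y then w else 0)"
proof -
  have ev: "eventually (\<lambda>y. (if c \<le> y then w else 0) = (if c \<le> x then w else 0)) (at_right x)"
  proof (cases "c \<le> x")
    case True
    then show ?thesis unfolding eventually_at_right_field by (intro exI[of _ "x+1"]) auto
  next
    case False
    then show ?thesis unfolding eventually_at_right_field by (intro exI[of _ c]) auto
  qed
  have "((\<lambda>y. if c \<le> y then w else 0) \<longlongrightarrow> (if c \<le> x then w else 0)) (at_right x)"
    by (rule tendsto_eventually[OF ev])
  then show ?thesis unfolding continuous_within by simp
qed

lemma stepsum_mono:
  assumes "\<forall>k<n. 0 \<le> W k" "x \<le> y"
  shows "stepsum n A W x \<le> stepsum n A W y"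
  unfolding stepsum_def using assms by (intro sum_mono) auto

lemma stepsum_low:
  assumes "\<forall>k<n. x < A k"
  shows "stepsum n A W x = 0"
  unfolding stepsum_def using assms by (intro sum.neutral) auto

lemma stepsum_high:
  assumes "\<forall>k<n. A k \<le> x"
  shows "stepsum n A W x = (\<Sum>k<n. W k)"
  unfolding stepsum_def using assms by (intro sum.cong) auto

lemma stepsum_right_cont: "continuous (at_right x) (stepsum n A W)"
  unfolding stepsum_def[abs_def] by (intro continuous_sum step_right_cont)

lemma integral_stepsum:
  assumes W: "\<forall>k<n. 0 \<le> W k" and W1: "(\<Sum>k<n. W k) = 1"
    and f: "f \<in> borel_measurable borel"
  shows "integral\<^sup>L (interval_measure (stepsum n A W)) f = (\<Sum>k<n. W k * f (A k))"
proof -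
  define xs where "xs = map (\<lambda>k. (A k, W k)) [0..<n]"
  have sl: "sum_list (map g xs) = (\<Sum>k<n. g (A k, W k))" for g :: "real \<times> real \<Rightarrow> real"
    unfolding xs_def by (simp add: sum_list_distinct_conv_sum_set atLeast0LessThan o_def)
  have wf: "pmf_of_list_wf xs"
    using W W1 unfolding xs_def pmf_of_list_wf_def by (auto simp: sum_list_distinct_conv_sum_set atLeast0LessThan o_def)
  define p where "p = pmf_of_list xs"
  define M' where "M' = distr (measure_pmf p) borel (\<lambda>x. x)"
  have rd1: "real_distribution M'"
    unfolding M'_def by (rule prob_space.real_distribution_distr[OF prob_space_measure_pmf]) simp
  define F where "F = stepsum n A W"
  define B where "B = (\<Sum>k<n. \<bar>A k\<bar>)"
  have AB: "\<bar>A k\<bar> \<le> B" if "k < n" for k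
    unfolding B_def using that by (intro member_le_sum) auto
  have "eventually (\<lambda>x. F x = 0) at_bot"
    unfolding eventually_at_bot_linorder F_def
    by (intro exI[of _ "-B-1"] allI impI stepsum_low) (use AB in force)
  then have lb: "(F \<longlongrightarrow> 0) at_bot" by (rule tendsto_eventually)
  have rd2: "real_distribution (interval_measure F)"
  proof (rule real_distribution_interval_measure)
    show "F x \<le> F y" if "x \<le> y" for x y unfolding F_def using stepsum_mono[OF W that] .
    show "continuous (at_right a) F" for a unfolding F_def by (rule stepsum_right_cont)
    show "(F \<longlongrightarrow> 0) at_bot" by (rule lb)
    have "eventually (\<lambda>x. F x = 1) at_top"
      unfolding eventually_at_top_linorder F_def
      by (intro exI[of _ "B"] allI impI) (subst stepsum_high, use AB W1 in force, simp add: W1)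
    then show "(F \<longlongrightarrow> 1) at_top" by (rule tendsto_eventually)
  qed
  have cdf2: "cdf (interval_measure F) = F"
    using rd2 by (intro cdf_interval_measure) (use lb in \<open>auto simp: F_def stepsum_mono[OF W] stepsum_right_cont\<close>)
  have cdf1: "cdf M' = F"
  proof
    fix x
    have "cdf M' x = measure (measure_pmf p) {..x}"
      unfolding cdf_def M'_def by (subst measure_distr) auto
    also have "\<dots> = (\<integral>y. indicator {..x} y \<partial>measure_pmf p)"
      by simp
    also have "\<dots> = sum_list (map (\<lambda>z. snd z * indicator {..x} (fst z)) xs)"
      unfolding p_def by (rule integral_pmf_of_list[OF wf])
    also have "\<dots> = F x"
      unfolding sl F_def stepsum_def by (intro sum.cong) (auto simp: indicator_def)
    finally show "cdf M' x = F x" .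
  qed
  have eq: "interval_measure F = M'"
    using cdf_unique[OF rd2 rd1] cdf1 cdf2 by simp
  have "integral\<^sup>L M' f = (\<integral>x. f x \<partial>measure_pmf p)"
    unfolding M'_def by (rule integral_distr) (auto simp: f)
  also have "\<dots> = sum_list (map (\<lambda>z. snd z * f (fst z)) xs)"
    unfolding p_def by (rule integral_pmf_of_list[OF wf])
  also have "\<dots> = (\<Sum>k<n. W k * f (A k))" unfolding sl by simp
  finally show ?thesis using eq F_def by simp
qed



lemma prior_D:
  assumes "prior F0 f0"
  shows "f0 integrable_on {0..1}" "\<And>x. x\<in>{0..1} \<Longrightarrow> f0 x > 0"
    "\<And>x. x\<in>{0..1} \<Longrightarrow> F0 x = integral {0..x} f0" "\<And>x. x < 0 \<Longrightarrow> F0 x = 0" "\<And>x. x \<ge> 1 \<Longrightarrow> F0 x = 1"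
  using assms unfolding prior_def by auto

lemma f0_int_sub:
  assumes "prior F0 f0" "0 \<le> a" "b \<le> 1"
  shows "f0 integrable_on {a..b}"
  by (rule integrable_on_subinterval[OF prior_D(1)[OF assms(1)]]) (use assms in auto)

lemma F0_diff:
  assumes "prior F0 f0" "0 \<le> x" "x \<le> y" "y \<le> 1"
  shows "F0 y - F0 x = integral {x..y} f0"
proof -
  have "integral {0..x} f0 + integral {x..y} f0 = integral {0..y} f0"
    by (rule Henstock_Kurzweil_Integration.integral_combine) (use assms f0_int_sub[OF assms(1), of 0 y] in auto)
  then show ?thesis using assms prior_D(3)[OF assms(1)] by auto
qed

lemma F0_0: "prior F0 f0 \<Longrightarrow> F0 0 = 0"
  using prior_D(3)[of F0 f0 0] by auto

lemma int_f0_nonneg: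
  assumes "prior F0 f0" "0 \<le> x" "y \<le> 1"
  shows "0 \<le> integral {x..y} f0"
  using assms prior_D(2)[OF assms(1)] by (intro integral_nonneg f0_int_sub[OF assms(1)]) (auto simp: less_imp_le)

lemma F0_mono:
  assumes "prior F0 f0" "x \<le> y"
  shows "F0 x \<le> F0 y"
proof -
  have a: "0 \<le> F0 z" "F0 z \<le> 1" if "0 \<le> z" "z \<le> 1" for z
    using F0_diff[OF assms(1), of 0 z] F0_diff[OF assms(1), of z 1] int_f0_nonneg[OF assms(1), of 0 z]
      int_f0_nonneg[OF assms(1), of z 1] that prior_D(5)[OF assms(1), of 1] F0_0[OF assms(1)] by auto
  show ?thesis
  proof (cases "x < 0")
    case True
    then show ?thesis using a[of y] prior_D(4,5)[OF assms(1)] by (cases "y < 0"; cases "y \<ge> 1") auto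
  next
    case False
    then show ?thesis using a[of x] a[of y] prior_D(5)[OF assms(1)] F0_diff[OF assms(1), of x y]
      int_f0_nonneg[OF assms(1), of x y] assms(2) a[of 1]  by (cases "y \<ge> 1"; cases "x \<le> 1") auto
  qed
qed

lemma F0_cont:
  assumes "prior F0 f0"
  shows "continuous_on UNIV F0"
proof -
  have c1: "continuous_on {0..1} F0"
    using indefinite_integral_continuous_1[OF prior_D(1)[OF assms]] prior_D(3)[OF assms]
    by (metis (no_types, lifting) continuous_on_cong)
  have c2: "continuous_on {..0} F0"
  proof -
    show ?thesis
      by (rule continuous_on_eq[where f="\<lambda>_. 0"]) (use prior_D(4)[OF assms] F0_0[OF assms] in \<open>auto simp: le_less\<close>)
  qed
  have c3: "continuous_on {1..} F0"
  proof -
    show ?thesis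
      by (rule continuous_on_eq[where f="\<lambda>_. 1"]) (use prior_D(5)[OF assms] in auto)
  qed
  have "continuous_on ({..0} \<union> {0..1} \<union> {1..}) F0"
    by (intro continuous_on_closed_Un c1 c2 c3) auto
  moreover have "{..0} \<union> {0..1} \<union> {1..} = (UNIV :: real set)" by auto
  ultimately show ?thesis by simp
qed

lemma int_f0_pos:
  assumes "prior F0 f0" "0 \<le> a" "a < b" "b \<le> 1"
  shows "0 < integral {a..b} f0"
proof (rule ccontr)
  assume "\<not> 0 < integral {a..b} f0"
  then have z: "integral {a..b} f0 = 0" using int_f0_nonneg[OF assms(1), of a b] assms by auto
  have ai: "f0 absolutely_integrable_on {a..b}"
    using assms prior_D(2)[OF assms(1)] by (intro nonnegative_absolutely_integrable_1 f0_int_sub[OF assms(1)]) (auto simp: less_imp_le)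
  have int: "integrable (lebesgue_on {a..b}) f0"
    using ai by (simp add: integrable_restrict_space set_integrable_def)
  have i0: "integral\<^sup>L (lebesgue_on {a..b}) f0 = 0"
    using lebesgue_integral_eq_integral[OF int] z by simp
  have sp: "space (lebesgue_on {a..b}) = {a..b}" by (simp add: space_restrict_space)
  have pos: "x \<in> space (lebesgue_on {a..b}) \<Longrightarrow> 0 < f0 x" for x
    using prior_D(2)[OF assms(1), of x] assms sp by auto
  have nn: "AE x in lebesgue_on {a..b}. 0 \<le> f0 x"
    by (rule AE_I2) (simp add: pos less_imp_le)
  have AE: "AE x in lebesgue_on {a..b}. f0 x = 0"
    using integral_nonneg_eq_0_iff_AE[OF int nn] i0 by simp
  have "AE x in lebesgue_on {a..b}. False"
    using AE by (rule AE_mp) (rule AE_I2, use pos in force)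
  then obtain Nn where Nn: "{x \<in> space (lebesgue_on {a..b}). \<not> False} \<subseteq> Nn" "emeasure (lebesgue_on {a..b}) Nn = 0"
      "Nn \<in> sets (lebesgue_on {a..b})"
    by (rule AE_E)
  have sub: "{a..b} \<subseteq> Nn" using Nn(1) sp by auto
  have "emeasure (lebesgue_on {a..b}) {a..b} = 0"
    using emeasure_mono[OF sub Nn(3)] Nn(2) by simp
  moreover have "emeasure (lebesgue_on {a..b}) {a..b} = emeasure lebesgue {a..b}"
    by (rule emeasure_restrict_space) simp_all
  moreover have "emeasure lebesgue {a..b} = ennreal (b - a)" using assms by simp
  ultimately show False using assms by simp
qed
lemma tf0_int:
  assumes "prior F0 f0" "0 \<le> a" "b \<le> 1"
  shows "(\<lambda>t. t * f0 t) integrable_on {a..b}"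
proof -
  have ai: "f0 absolutely_integrable_on {a..b}"
    using assms prior_D(2)[OF assms(1)] by (intro nonnegative_absolutely_integrable_1 f0_int_sub[OF assms(1)]) (auto simp: less_imp_le)
  have "(\<lambda>t. t * f0 t) absolutely_integrable_on {a..b}"
  proof (rule absolutely_integrable_bounded_measurable_product_real)
    show "(\<lambda>t. t) \<in> borel_measurable (lebesgue_on {a..b})" by (intro continuous_imp_measurable_on_sets_lebesgue continuous_intros) auto
    show "{a..b} \<in> sets lebesgue" by simp
    show "bounded ((\<lambda>t. t) ` {a..b})" by simp
  qed (rule ai)
  then show ?thesis using set_lebesgue_integral_eq_integral(1) by blast
qed


lemma T_bounds:
  assumes "prior F0 f0" "0 \<le> p" "p \<le> q" "q \<le> 1"
  shows "p * (F0 q - F0 p) \<le> integral {p..q} (\<lambda>t. t * f0 t)"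
    "integral {p..q} (\<lambda>t. t * f0 t) \<le> q * (F0 q - F0 p)"
proof -
  have fi: "f0 integrable_on {p..q}" using f0_int_sub[OF assms(1)] assms by auto
  have ti: "(\<lambda>t. t * f0 t) integrable_on {p..q}" using tf0_int[OF assms(1)] assms by auto
  have nn: "0 \<le> f0 t" if "t \<in> {p..q}" for t using prior_D(2)[OF assms(1), of t] that assms by auto
  have d: "F0 q - F0 p = integral {p..q} f0" using F0_diff[OF assms] .
  have "integral {p..q} (\<lambda>t. p * f0 t) \<le> integral {p..q} (\<lambda>t. t * f0 t)"
    using fi ti nn by (intro integral_le integrable_on_mult_right) (auto intro!: mult_right_mono)
  then show "p * (F0 q - F0 p) \<le> integral {p..q} (\<lambda>t. t * f0 t)" using d by simp
  have "integral {p..q} (\<lambda>t. t * f0 t) \<le> integral {p..q} (\<lambda>t. q * f0 t)"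
    using fi ti nn by (intro integral_le integrable_on_mult_right) (auto intro!: mult_right_mono)
  then show "integral {p..q} (\<lambda>t. t * f0 t) \<le> q * (F0 q - F0 p)" using d by simp
qed

lemma T_add:
  assumes "prior F0 f0" "0 \<le> p" "p \<le> r" "r \<le> q" "q \<le> 1"
  shows "integral {p..r} (\<lambda>t. t * f0 t) + integral {r..q} (\<lambda>t. t * f0 t) = integral {p..q} (\<lambda>t. t * f0 t)"
  by (rule Henstock_Kurzweil_Integration.integral_combine) (use assms tf0_int[OF assms(1), of p q] in auto)

definition Cfun :: "(real \<Rightarrow> real) \<Rightarrow> (real \<Rightarrow> real) \<Rightarrow> real \<Rightarrow> real" where
  "Cfun F0 f0 x = x * F0 x - integral {0..x} (\<lambda>t. t * f0 t)"

lemma Cfun_bound: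
  assumes "prior F0 f0" "x \<in> {0..1}" "y \<in> {0..1}"
  shows "\<bar>Cfun F0 f0 y - Cfun F0 f0 x - (y - x) * F0 x\<bar> \<le> \<bar>y - x\<bar> * \<bar>F0 y - F0 x\<bar>"
proof (cases "x \<le> y")
  case True
  have add: "integral {0..x} (\<lambda>t. t * f0 t) + integral {x..y} (\<lambda>t. t * f0 t) = integral {0..y} (\<lambda>t. t * f0 t)"
    using T_add[OF assms(1), of 0 x y] assms True by auto
  have b: "x * (F0 y - F0 x) \<le> integral {x..y} (\<lambda>t. t * f0 t)" "integral {x..y} (\<lambda>t. t * f0 t) \<le> y * (F0 y - F0 x)"
    using T_bounds[OF assms(1), of x y] assms True by auto
  have m: "F0 x \<le> F0 y" using F0_mono[OF assms(1) True] .
  have e: "Cfun F0 f0 y - Cfun F0 f0 x - (y - x) * F0 x = y * (F0 y - F0 x) - integral {x..y} (\<lambda>t. t * f0 t)"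
    unfolding Cfun_def using add by (simp add: algebra_simps)
  have "0 \<le> y * (F0 y - F0 x) - integral {x..y} (\<lambda>t. t * f0 t)" using b by simp
  moreover have "y * (F0 y - F0 x) - integral {x..y} (\<lambda>t. t * f0 t) \<le> (y - x) * (F0 y - F0 x)"
    using b by (simp add: algebra_simps)
  ultimately show ?thesis using e True m by (simp add: abs_mult)
next
  case False
  have add: "integral {0..y} (\<lambda>t. t * f0 t) + integral {y..x} (\<lambda>t. t * f0 t) = integral {0..x} (\<lambda>t. t * f0 t)"
    using T_add[OF assms(1), of 0 y x] assms False by auto
  have b: "y * (F0 x - F0 y) \<le> integral {y..x} (\<lambda>t. t * f0 t)" "integral {y..x} (\<lambda>t. t * f0 t) \<le> x * (F0 x - F0 y)"
    using T_bounds[OF assms(1), of y x] assms False by auto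
  have m: "F0 y \<le> F0 x" using F0_mono[OF assms(1)] False by auto
  have e: "Cfun F0 f0 y - Cfun F0 f0 x - (y - x) * F0 x = integral {y..x} (\<lambda>t. t * f0 t) - y * (F0 x - F0 y)"
    unfolding Cfun_def using add by (simp add: algebra_simps)
  have "0 \<le> integral {y..x} (\<lambda>t. t * f0 t) - y * (F0 x - F0 y)" using b by simp
  moreover have "integral {y..x} (\<lambda>t. t * f0 t) - y * (F0 x - F0 y) \<le> (x - y) * (F0 x - F0 y)"
    using b by (simp add: algebra_simps)
  ultimately show ?thesis using e False m by (simp add: abs_mult abs_minus_commute)
qed

lemma Cfun_deriv:
  assumes "prior F0 f0" "x \<in> {0..1}"
  shows "(Cfun F0 f0 has_real_derivative F0 x) (at x within {0..1})"
proof -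
  let ?F = "at x within {0..1}"
  have cF: "(F0 \<longlongrightarrow> F0 x) ?F"
    using F0_cont[OF assms(1)] by (meson UNIV_I continuous_on_def tendsto_within_subset subset_UNIV)
  have g0: "((\<lambda>y. \<bar>F0 y - F0 x\<bar>) \<longlongrightarrow> 0) ?F"
  proof -
    have "((\<lambda>y. F0 y - F0 x) \<longlongrightarrow> F0 x - F0 x) ?F" by (intro tendsto_diff cF tendsto_const)
    then have "((\<lambda>y. F0 y - F0 x) \<longlongrightarrow> 0) ?F" by simp
    then show ?thesis by (rule tendsto_rabs_zero)
  qed
  have ev: "eventually (\<lambda>y. norm ((Cfun F0 f0 y - Cfun F0 f0 x) / (y - x) - F0 x) \<le> \<bar>F0 y - F0 x\<bar>) ?F"
    unfolding eventually_at_filter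
  proof (rule always_eventually, intro allI impI)
    fix y assume y: "y \<noteq> x" "y \<in> {0..1}"
    have "(Cfun F0 f0 y - Cfun F0 f0 x) / (y - x) - F0 x = (Cfun F0 f0 y - Cfun F0 f0 x - (y - x) * F0 x) / (y - x)"
      using y by (simp add: field_simps)
    then have "norm ((Cfun F0 f0 y - Cfun F0 f0 x) / (y - x) - F0 x) = \<bar>Cfun F0 f0 y - Cfun F0 f0 x - (y - x) * F0 x\<bar> / \<bar>y - x\<bar>"
      by simp
    also have "\<dots> \<le> \<bar>y - x\<bar> * \<bar>F0 y - F0 x\<bar> / \<bar>y - x\<bar>"
      using Cfun_bound[OF assms y(2)] by (intro divide_right_mono) auto
    also have "\<dots> = \<bar>F0 y - F0 x\<bar>" using y by simp
    finally show "norm ((Cfun F0 f0 y - Cfun F0 f0 x) / (y - x) - F0 x) \<le> \<bar>F0 y - F0 x\<bar>" .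
  qed
  have "((\<lambda>y. (Cfun F0 f0 y - Cfun F0 f0 x) / (y - x) - F0 x) \<longlongrightarrow> 0) ?F"
    by (rule Lim_null_comparison[OF ev g0])
  then have "((\<lambda>y. ((Cfun F0 f0 y - Cfun F0 f0 x) / (y - x) - F0 x) + F0 x) \<longlongrightarrow> 0 + F0 x) ?F"
    by (intro tendsto_add tendsto_const)
  then show ?thesis unfolding has_field_derivative_iff by simp
qed

lemma int_F0:
  assumes "prior F0 f0" "0 \<le> a" "a \<le> b" "b \<le> 1"
  shows "integral {a..b} F0 = b * F0 b - a * F0 a - integral {a..b} (\<lambda>t. t * f0 t)"
proof -
  have "(F0 has_integral (Cfun F0 f0 b - Cfun F0 f0 a)) {a..b}"
  proof (rule fundamental_theorem_of_calculus[OF assms(3)])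
    fix x assume x: "x \<in> {a..b}"
    have "(Cfun F0 f0 has_real_derivative F0 x) (at x within {0..1})"
      using Cfun_deriv[OF assms(1)] x assms by auto
    then have "(Cfun F0 f0 has_real_derivative F0 x) (at x within {a..b})"
      by (rule has_field_derivative_subset) (use assms in auto)
    then show "(Cfun F0 f0 has_vector_derivative F0 x) (at x within {a..b})"
      by (simp add: has_real_derivative_iff_has_vector_derivative)
  qed
  then have "integral {a..b} F0 = Cfun F0 f0 b - Cfun F0 f0 a" by (rule integral_unique)
  also have "\<dots> = b * F0 b - a * F0 a - integral {a..b} (\<lambda>t. t * f0 t)"
    unfolding Cfun_def using T_add[OF assms(1), of 0 a b] assms by (simp add: algebra_simps)
  finally show ?thesis .
qed

lemma cm_prop:
  assumes "prior F0 f0" "0 \<le> a" "a < b" "b \<le> 1"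
  shows "cond_mean f0 a b * (F0 b - F0 a) = integral {a..b} (\<lambda>t. t * f0 t)"
    "a \<le> cond_mean f0 a b" "cond_mean f0 a b \<le> b" "0 < F0 b - F0 a"
proof -
  have I: "F0 b - F0 a = integral {a..b} f0" using F0_diff[OF assms(1)] assms by auto
  have P: "0 < integral {a..b} f0" using int_f0_pos[OF assms] .
  have cm: "cond_mean f0 a b = integral {a..b} (\<lambda>t. t * f0 t) / integral {a..b} f0"
    unfolding cond_mean_def using assms by simp
  show "cond_mean f0 a b * (F0 b - F0 a) = integral {a..b} (\<lambda>t. t * f0 t)"
    using P I cm by simp
  have B: "a * (F0 b - F0 a) \<le> integral {a..b} (\<lambda>t. t * f0 t)" "integral {a..b} (\<lambda>t. t * f0 t) \<le> b * (F0 b - F0 a)"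
    using T_bounds[OF assms(1), of a b] assms by auto
  show "a \<le> cond_mean f0 a b" using B P I cm by (simp add: pos_le_divide_eq)
  show "cond_mean f0 a b \<le> b" using B P I cm by (simp add: pos_divide_le_eq)
  show "0 < F0 b - F0 a" using P I by simp
qed

lemma cm_bounds:
  assumes "prior F0 f0" "0 \<le> a" "a \<le> b" "b \<le> 1"
  shows "a \<le> cond_mean f0 a b" "cond_mean f0 a b \<le> b"
  using cm_prop[OF assms(1,2) _ assms(4)] assms(3) unfolding cond_mean_def
  by (cases "a < b"; auto)+

lemma price_0: "price f0 N v q 0 = 0"
  unfolding price_def by simp

lemma price_step:
  assumes "1 \<le> j"
  shows "price f0 N v q j = price f0 N v q (j - 1) + wpool f0 N v j * (qext q j - qext q (j - 1))"
proof -
  obtain k where k: "j = Suc k" using assms by (cases j) auto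
  show ?thesis unfolding price_def k by simp
qed

lemma val_diff:
  assumes "k \<le> l"
  shows "(y * qext q l - price f0 N v q l) - (y * qext q k - price f0 N v q k)
       = (\<Sum>j\<in>{k<..l}. (y - wpool f0 N v j) * (qext q j - qext q (j - 1)))"
  using assms
proof (induction l)
  case 0
  then show ?case by simp
next
  case (Suc l)
  show ?case
  proof (cases "k = Suc l")
    case True
    then show ?thesis by simp
  next
    case False
    then have kl: "k \<le> l" using Suc.prems by simp
    have "{k<..Suc l} = insert (Suc l) {k<..l}" using kl by auto
    then have s: "(\<Sum>j\<in>{k<..Suc l}. (y - wpool f0 N v j) * (qext q j - qext q (j - 1)))
       = (y - wpool f0 N v (Suc l)) * (qext q (Suc l) - qext q l) + (\<Sum>j\<in>{k<..l}. (y - wpool f0 N v j) * (qext q j - qext q (j - 1)))"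
      by simp
    have p: "price f0 N v q (Suc l) = price f0 N v q l + wpool f0 N v (Suc l) * (qext q (Suc l) - qext q l)"
      using price_step[of "Suc l"] by simp
    show ?thesis using Suc.IH[OF kl] s p by (simp add: algebra_simps)
  qed
qed

lemma maximizer:
  assumes "j \<le> N"
    and lo: "\<And>k. 1 \<le> k \<Longrightarrow> k \<le> j \<Longrightarrow> wpool f0 N v k \<le> y"
    and hi: "\<And>k. j < k \<Longrightarrow> k \<le> N \<Longrightarrow> y \<le> wpool f0 N v k"
    and qm: "\<And>k. 1 \<le> k \<Longrightarrow> k \<le> N \<Longrightarrow> qext q (k - 1) \<le> qext q k"
    and "k \<le> N"
  shows "y * qext q k - price f0 N v q k \<le> y * qext q j - price f0 N v q j"
proof (cases "k \<le> j")
  case True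
  have "0 \<le> (\<Sum>i\<in>{k<..j}. (y - wpool f0 N v i) * (qext q i - qext q (i - 1)))"
    using lo qm assms(1) by (intro sum_nonneg mult_nonneg_nonneg) auto
  then show ?thesis using val_diff[OF True, of y q f0 N v] by simp
next
  case False
  have "(\<Sum>i\<in>{j<..k}. (y - wpool f0 N v i) * (qext q i - qext q (i - 1))) \<le> 0"
    using hi qm assms(5) False by (intro sum_nonpos mult_nonpos_nonneg) auto
  then show ?thesis using val_diff[of j k y q f0 N v] False by simp
qed

lemma choice_props:
  fixes y :: real
  shows "choice f0 N v q y \<le> N"
    "\<And>k. k \<le> N \<Longrightarrow> y * qext q k - price f0 N v q k \<le> y * qext q (choice f0 N v q y) - price f0 N v q (choice f0 N v q y)"
    "\<And>j. j \<le> N \<Longrightarrow> (\<forall>k\<le>N. y * qext q k - price f0 N v q k \<le> y * qext q j - price f0 N v q j) \<Longrightarrow> j \<le> choice f0 N v q y"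
proof -
  let ?val = "\<lambda>k. y * qext q k - price f0 N v q k"
  let ?P = "\<lambda>j. j \<le> N \<and> (\<forall>k\<le>N. ?val k \<le> ?val j)"
  obtain j0 where j0: "j0 \<in> {..N}" "?val j0 = Max (?val ` {..N})"
  proof -
    have "Max (?val ` {..N}) \<in> ?val ` {..N}" by (rule Max_in) auto
    then show ?thesis using that by (metis (no_types, lifting) imageE)
  qed
  have Pj0: "?P j0" using j0 by (auto intro: Max_ge)
  have bnd: "\<And>j. ?P j \<Longrightarrow> j \<le> N" by simp
  have PC: "?P (choice f0 N v q y)"
    unfolding choice_def by (rule GreatestI_nat[where P="?P" and k=j0 and b=N]) (use Pj0 in auto)
  show "choice f0 N v q y \<le> N" using PC by simp
  show "\<And>k. k \<le> N \<Longrightarrow> ?val k \<le> ?val (choice f0 N v q y)" using PC by simp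
  show "\<And>j. j \<le> N \<Longrightarrow> (\<forall>k\<le>N. ?val k \<le> ?val j) \<Longrightarrow> j \<le> choice f0 N v q y"
    unfolding choice_def by (rule Greatest_le_nat[where b=N]) auto
qed

lemma qext_smono:
  assumes "0 < q 1" "\<forall>i\<in>{1..<N}. q i < q (i + 1)"
  shows "j < k \<Longrightarrow> k \<le> N \<Longrightarrow> qext q j < qext q k"
proof (induction k)
  case 0
  then show ?case by simp
next
  case (Suc k)
  have step: "qext q k < qext q (Suc k)"
  proof (cases "k = 0")
    case True
    then show ?thesis using assms(1) by (simp add: qext_def)
  next
    case False
    then have "k \<in> {1..<N}" using Suc.prems by auto
    then show ?thesis using assms(2) False by (simp add: qext_def)
  qed
  show ?case
  proof (cases "j = k")
    case True
    then show ?thesis using step by simp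
  next
    case False
    then have "qext q j < qext q k" using Suc by simp
    then show ?thesis using step by simp
  qed
qed

lemma qext_mono:
  assumes "0 < q 1" "\<forall>i\<in>{1..<N}. q i < q (i + 1)" "j \<le> k" "k \<le> N"
  shows "qext q j \<le> qext q k"
  using qext_smono[OF assms(1,2), of j k] assms(3,4) by (cases "j = k") auto

lemma choice_mono:
  assumes "0 < q 1" "\<forall>i\<in>{1..<N}. q i < q (i + 1)" "y \<le> y'"
  shows "choice f0 N v q y \<le> choice f0 N v q y'"
proof (rule ccontr)
  let ?c = "choice f0 N v q y" and ?c' = "choice f0 N v q y'"
  assume "\<not> ?c \<le> ?c'"
  then have lt: "?c' < ?c" by simp
  have cN: "?c \<le> N" "?c' \<le> N" using choice_props(1) by auto
  have Q: "qext q ?c' < qext q ?c" using qext_smono[OF assms(1,2) lt cN(1)] .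
  have a: "y' * qext q ?c - price f0 N v q ?c \<le> y' * qext q ?c' - price f0 N v q ?c'"
    using choice_props(2)[OF cN(1), where y="y'"] by simp
  have b: "y * qext q ?c' - price f0 N v q ?c' \<le> y * qext q ?c - price f0 N v q ?c"
    using choice_props(2)[OF cN(2), where y="y"] by simp
  have "(y' - y) * (qext q ?c - qext q ?c') \<le> 0" using a b by (simp add: algebra_simps)
  have "y < y' \<or> y = y'" using assms(3) by auto
  then show False
  proof
    assume "y < y'"
    then have "0 < (y' - y) * (qext q ?c - qext q ?c')" using Q by simp
    then show False using \<open>(y' - y) * (qext q ?c - qext q ?c') \<le> 0\<close> by simp
  next
    assume "y = y'"
    then show False using lt by simp
  qed
qed

lemma price_mono:
  assumes "0 < q 1" "\<forall>i\<in>{1..<N}. q i < q (i + 1)"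
    and wp: "\<And>j. 1 \<le> j \<Longrightarrow> j \<le> N \<Longrightarrow> 0 \<le> wpool f0 N v j"
    and "j \<le> k" "k \<le> N"
  shows "price f0 N v q j \<le> price f0 N v q k"
  using assms(4,5)
proof (induction k)
  case 0
  then show ?case by simp
next
  case (Suc k)
  have st: "price f0 N v q k \<le> price f0 N v q (Suc k)"
  proof -
    have "0 \<le> wpool f0 N v (Suc k) * (qext q (Suc k) - qext q k)"
      using wp[of "Suc k"] Suc.prems qext_mono[OF assms(1,2), of k "Suc k"] by (intro mult_nonneg_nonneg) auto
    then show ?thesis using price_step[of "Suc k" f0 N v q] by simp
  qed
  show ?case
  proof (cases "j = Suc k")
    case True then show ?thesis by simp
  next
    case False then show ?thesis using Suc st by simp
  qed
qed

lemma phi_measurable: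
  assumes "0 < q 1" "\<forall>i\<in>{1..<N}. q i < q (i + 1)"
    and wp: "\<And>j. 1 \<le> j \<Longrightarrow> j \<le> N \<Longrightarrow> 0 \<le> wpool f0 N v j"
  shows "(\<lambda>w. (w + b) * mech_q f0 N v q w - mech_t f0 N v q w) \<in> borel_measurable borel"
proof -
  have m1: "mono (mech_q f0 N v q)"
    unfolding mono_def mech_q_def
    using choice_mono[OF assms(1,2)] choice_props(1) qext_mono[OF assms(1,2)] by blast
  have m2: "mono (mech_t f0 N v q)"
    unfolding mono_def mech_t_def
    using choice_mono[OF assms(1,2)] choice_props(1) price_mono[OF assms(1,2) wp] by blast
  have [measurable]: "mech_q f0 N v q \<in> borel_measurable borel" "mech_t f0 N v q \<in> borel_measurable borel"
    using borel_measurable_mono m1 m2 by auto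
  show ?thesis by measurable
qed

lemma stepsum_cdf01:
  assumes "\<forall>k<n. 0 \<le> W k" "\<forall>k<n. 0 \<le> A k \<and> A k \<le> 1" "(\<Sum>k<n. W k) = 1"
  shows "cdf01 (stepsum n A W)"
  unfolding cdf01_def
proof (intro conjI allI impI)
  show "mono (stepsum n A W)" unfolding mono_def using stepsum_mono[OF assms(1)] by blast
  show "continuous (at_right x) (stepsum n A W)" for x by (rule stepsum_right_cont)
  show "stepsum n A W x = 0" if "x < 0" for x using assms(2) that by (intro stepsum_low) force
  show "stepsum n A W x = 1" if "1 \<le> x" for x using assms(2,3) that by (subst stepsum_high) force+
qed

lemma step_has_integral:
  fixes c w lo x :: real
  assumes "lo \<le> x"
  shows "((\<lambda>y. if c \<le> y then w else 0) has_integral (w * max 0 (x - max c lo))) {lo..x}"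
proof -
  let ?S = "{max c lo..x}"
  have "((\<lambda>_. w) has_integral (w * max 0 (x - max c lo))) ?S"
    using has_integral_const_real[of w "max c lo" x] by (cases "max c lo \<le> x") (auto simp: max_def mult.commute)
  then have "((\<lambda>y. if y \<in> ?S then w else 0) has_integral (w * max 0 (x - max c lo))) {lo..x}"
    by (subst has_integral_restrict) auto
  then show ?thesis
    by (rule has_integral_eq[rotated]) auto
qed

lemma step_integrable:
  fixes c w lo x :: real
  shows "(\<lambda>y. if c \<le> y then w else 0) integrable_on {lo..x}"
  using step_has_integral[of lo x c w] by (cases "lo \<le> x") (auto intro: has_integral_integrable)

lemma stepsum_integrable: "stepsum n A W integrable_on {lo..x}"
  unfolding stepsum_def[abs_def] by (intro integrable_sum step_integrable) auto

lemma step_integral0: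
  fixes c w x :: real
  assumes "0 \<le> c" "0 \<le> x"
  shows "integral {0..x} (\<lambda>y. if c \<le> y then w else 0) = w * max 0 (x - c)"
  using integral_unique[OF step_has_integral[OF assms(2), of c w]] assms by simp

lemma step_integral_lo:
  fixes c w x lo :: real
  assumes "lo \<le> c" "lo \<le> x"
  shows "integral {lo..x} (\<lambda>y. if c \<le> y then w else 0) = w * max 0 (x - c)"
  using integral_unique[OF step_has_integral[OF assms(2), of c w]] assms by simp

lemma sum_mod:
  fixes h :: "real \<Rightarrow> real \<Rightarrow> real" and n i :: nat
  assumes "i < n" "\<And>z. h z 0 = 0"
  shows "(\<Sum>k<n+2. h (if k = n then X else if k = n+1 then Y else P k) (if k = n then p else if k = n+1 then r else if k = i then 0 else R k))
       = (\<Sum>k<n. h (P k) (R k)) - h (P i) (R i) + h X p + h Y r"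
proof -
  have "(\<Sum>k<n+2. h (if k = n then X else if k = n+1 then Y else P k) (if k = n then p else if k = n+1 then r else if k = i then 0 else R k))
      = (\<Sum>k<n. h (P k) (if k = i then 0 else R k)) + h X p + h Y r"
    by (simp add: numeral_2_eq_2)
  also have "(\<Sum>k<n. h (P k) (if k = i then 0 else R k)) = (\<Sum>k<n. h (P k) (R k)) - h (P i) (R i)"
  proof -
    have "(\<Sum>k<n. h (P k) (if k = i then 0 else R k)) = h (P i) 0 + (\<Sum>k\<in>{..<n}-{i}. h (P k) (if k = i then 0 else R k))"
      using assms(1) by (subst sum.remove[of _ i]) auto
    also have "\<dots> = (\<Sum>k\<in>{..<n}-{i}. h (P k) (R k))" using assms(2) by (simp add: sum.cong[OF refl, of "{..<n}-{i}" "\<lambda>k. h (P k) (if k = i then 0 else R k)" "\<lambda>k. h (P k) (R k)"])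
    also have "(\<Sum>k<n. h (P k) (R k)) = h (P i) (R i) + (\<Sum>k\<in>{..<n}-{i}. h (P k) (R k))"
      using assms(1) by (subst sum.remove[of _ i]) auto
    ultimately show ?thesis by simp
  qed
  finally show ?thesis .
qed

locale setting =
  fixes F0 f0 :: "real \<Rightarrow> real" and N :: nat and v q :: "nat \<Rightarrow> real"
  assumes pr: "prior F0 f0" and N1: "N \<ge> 1"
    and vb: "\<And>k. 1 \<le> k \<Longrightarrow> k \<le> N \<Longrightarrow> 0 \<le> v k \<and> v k \<le> 1"
    and vs: "\<And>k. 1 \<le> k \<Longrightarrow> k < N \<Longrightarrow> v k \<le> v (k+1)"
    and q1: "0 < q 1" and qinc: "\<forall>i\<in>{1..<N}. q i < q (i + 1)"
begin

lemma v_mono: "1 \<le> j \<Longrightarrow> j \<le> k \<Longrightarrow> k \<le> N \<Longrightarrow> v j \<le> v k"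
proof (induction k)
  case 0 then show ?case by simp
next
  case (Suc k)
  show ?case
  proof (cases "j = Suc k")
    case True then show ?thesis by simp
  next
    case False
    then have "v j \<le> v k" using Suc by simp
    moreover have "v k \<le> v (Suc k)" using vs[of k] Suc.prems False by simp
    ultimately show ?thesis by simp
  qed
qed

lemma vext_eq: "k \<le> N \<Longrightarrow> vext N v k = v k"
  unfolding vext_def by simp

lemma vext_N1: "vext N v (N+1) = 1"
  unfolding vext_def by simp

lemma vext_bounds: "1 \<le> k \<Longrightarrow> k \<le> N+1 \<Longrightarrow> 0 \<le> vext N v k \<and> vext N v k \<le> 1"
  unfolding vext_def using vb by auto

lemma vext_le: "1 \<le> j \<Longrightarrow> j \<le> N \<Longrightarrow> j \<le> k \<Longrightarrow> k \<le> N+1 \<Longrightarrow> v j \<le> vext N v k"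
  unfolding vext_def using v_mono vb by (cases "k = N+1") auto

lemma wp_bounds:
  assumes "1 \<le> k" "k \<le> N"
  shows "v k \<le> wpool f0 N v k" "wpool f0 N v k \<le> vext N v (k+1)"
  unfolding wpool_def
  using cm_bounds[OF pr, of "v k" "vext N v (k+1)"] vb[OF assms] vext_le[of k "k+1"] vext_bounds[of "k+1"] assms
  by auto

lemma wp_nonneg: "1 \<le> k \<Longrightarrow> k \<le> N \<Longrightarrow> 0 \<le> wpool f0 N v k"
  using wp_bounds vb by (meson order.trans)

lemma wp_le: "1 \<le> k \<Longrightarrow> k < i \<Longrightarrow> i \<le> N \<Longrightarrow> wpool f0 N v k \<le> v i"
  using wp_bounds(2)[of k] vext_eq[of "k+1"] v_mono[of "k+1" i] by auto

lemma wp_ge: "1 \<le> i \<Longrightarrow> i < k \<Longrightarrow> k \<le> N \<Longrightarrow> v (i+1) \<le> wpool f0 N v k"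
  using wp_bounds(1)[of k] v_mono[of "i+1" k] by auto

lemma wp_mono: "1 \<le> k \<Longrightarrow> k \<le> l \<Longrightarrow> l \<le> N \<Longrightarrow> wpool f0 N v k \<le> wpool f0 N v l"
  using wp_le[of k l] wp_bounds(1)[of l] by (cases "k = l") auto

definition A :: "nat \<Rightarrow> real" where
  "A k = (if k = 0 then cond_mean f0 0 (v 1) else wpool f0 N v k)"

definition Wt :: "nat \<Rightarrow> real" where
  "Wt k = (if k = 0 then F0 (v 1) else F0 (vext N v (k+1)) - F0 (v k))"

lemma A0_bounds: "0 \<le> A 0" "A 0 \<le> v 1"
  unfolding A_def using cm_bounds[OF pr, of 0 "v 1"] vb[of 1] N1 by auto

lemma A_bounds: "k < N+1 \<Longrightarrow> 0 \<le> A k \<and> A k \<le> 1"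
proof (cases "k = 0")
  case True then show ?thesis using A0_bounds vb[of 1] N1 by auto
next
  case False
  assume "k < N+1"
  then show ?thesis using False wp_nonneg[of k] wp_bounds(2)[of k] vext_bounds[of "k+1"] unfolding A_def by auto
qed

lemma A_le: "k < i \<Longrightarrow> i \<le> N \<Longrightarrow> A k \<le> v i"
proof (cases "k = 0")
  case True
  assume "k < i" "i \<le> N"
  then show ?thesis using True A0_bounds v_mono[of 1 i] by auto
next
  case False
  assume "k < i" "i \<le> N"
  then show ?thesis using False wp_le[of k i] unfolding A_def by auto
qed

lemma Wt_nonneg: "k < N+1 \<Longrightarrow> 0 \<le> Wt k"
  unfolding Wt_def using F0_mono[OF pr] vext_le[of k "k+1"] F0_mono[OF pr, of 0 "v 1"] vb[of 1] N1 F0_0[OF pr]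
  by (cases "k = 0") (auto simp: le_diff_eq)

lemma Wt_sum: "(\<Sum>k<N+1. Wt k) = 1"
proof -
  have "(\<Sum>k<N+1. Wt k) = Wt 0 + (\<Sum>k<N. Wt (Suc k))" unfolding Suc_eq_plus1[symmetric] by (rule sum.lessThan_Suc_shift)
  also have "(\<Sum>k<N. Wt (Suc k)) = (\<Sum>k<N. F0 (vext N v (Suc (Suc k))) - F0 (vext N v (Suc k)))"
    by (intro sum.cong) (auto simp: Wt_def vext_eq)
  also have "\<dots> = F0 (vext N v (Suc N)) - F0 (vext N v (Suc 0))"
    by (rule sum_lessThan_telescope[where f="\<lambda>k. F0 (vext N v (Suc k))"])
  finally show ?thesis using vext_N1 vext_eq[of 1] N1 prior_D(5)[OF pr, of 1] by (simp add: Wt_def)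
qed

lemma sumWt_lt:
  assumes "1 \<le> i" "i \<le> N"
  shows "(\<Sum>k<i. Wt k) = F0 (v i)"
proof -
  obtain i0 where i0: "i = Suc i0" using assms by (cases i) auto
  have "(\<Sum>k<i. Wt k) = Wt 0 + (\<Sum>k<i0. Wt (Suc k))" unfolding i0 by (rule sum.lessThan_Suc_shift)
  also have "(\<Sum>k<i0. Wt (Suc k)) = (\<Sum>k<i0. F0 (v (Suc (Suc k))) - F0 (v (Suc k)))"
    using assms i0 by (intro sum.cong) (auto simp: Wt_def vext_eq)
  also have "\<dots> = F0 (v (Suc i0)) - F0 (v (Suc 0))"
    by (rule sum_lessThan_telescope[where f="\<lambda>k. F0 (v (Suc k))"])
  finally show ?thesis using i0 by (simp add: Wt_def)
qed

lemma G_eq: "G_BHM F0 f0 N v = stepsum (N+1) A Wt"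
proof
  fix x
  have "stepsum (N+1) A Wt x = (if A 0 \<le> x then Wt 0 else 0) + (\<Sum>k<N. if A (Suc k) \<le> x then Wt (Suc k) else 0)"
    unfolding stepsum_def Suc_eq_plus1[symmetric] by (rule sum.lessThan_Suc_shift)
  also have "(\<Sum>k<N. if A (Suc k) \<le> x then Wt (Suc k) else 0) = (\<Sum>k=1..N. if wpool f0 N v k \<le> x then F0 (vext N v (k + 1)) - F0 (v k) else 0)"
    unfolding One_nat_def sum.atLeast1_atMost_eq by (intro sum.cong refl) (simp add: A_def Wt_def)
  finally have c: "stepsum (N+1) A Wt x = (if A 0 \<le> x then Wt 0 else 0) + (\<Sum>k=1..N. if wpool f0 N v k \<le> x then F0 (vext N v (k + 1)) - F0 (v k) else 0)" .
  have a0: "A 0 = cond_mean f0 0 (v 1)" and w0: "Wt 0 = F0 (v 1)" by (simp_all add: A_def Wt_def)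
  show "G_BHM F0 f0 N v x = stepsum (N+1) A Wt x"
    unfolding G_BHM_def by (simp only: c a0 w0)
qed

lemma G_local:
  assumes "1 \<le> i" "i \<le> N" "v i \<le> y" "y < vext N v (i+1)"
  shows "stepsum (N+1) A Wt y = F0 (v i) + (if A i \<le> y then Wt i else 0)"
proof -
  let ?f = "\<lambda>k. if A k \<le> y then Wt k else 0"
  have s1: "(\<Sum>k<N+1. ?f k) = (\<Sum>k\<in>{0..<Suc i}. ?f k) + (\<Sum>k\<in>{Suc i..<N+1}. ?f k)"
    unfolding atLeast0LessThan[symmetric] by (rule sum.atLeastLessThan_concat[symmetric]) (use assms in auto)
  have s2: "(\<Sum>k\<in>{0..<Suc i}. ?f k) = (\<Sum>k<i. ?f k) + ?f i"
    by (simp only: atLeast0LessThan sum.lessThan_Suc)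
  have s3: "(\<Sum>k<i. ?f k) = (\<Sum>k<i. Wt k)"
    using A_le[OF _ assms(2)] assms(3) by (intro sum.cong) (auto intro: order.trans)
  have s4: "(\<Sum>k\<in>{Suc i..<N+1}. ?f k) = 0"
  proof (intro sum.neutral ballI)
    fix k assume k: "k \<in> {Suc i..<N+1}"
    then have "i < N" by auto
    then have "vext N v (i+1) = v (i+1)" by (simp add: vext_eq)
    then have "y < A k" using wp_ge[of i k] k assms unfolding A_def by auto
    then show "?f k = 0" by simp
  qed
  show ?thesis unfolding stepsum_def using s1 s2 s3 s4 sumWt_lt[OF assms(1,2)] by linarith
qed

end

locale pool = setting +
  fixes b :: real and i :: nat
  assumes b0: "0 \<le> b" and i1: "1 \<le> i" and iN: "i \<le> N" and gap: "b < wpool f0 N v i - v i"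
begin

definition "a = v i"
definition "e = vext N v (i+1)"
definition "W = wpool f0 N v i"
definition "s = (a + (W - b)) / 2"
definition "mL = F0 s - F0 a"
definition "xL = cond_mean f0 a s"
definition "mR = F0 e - F0 s"
definition "xR = cond_mean f0 s e"
definition "m = F0 e - F0 a"

lemma W_eq: "W = cond_mean f0 a e"
  unfolding W_def wpool_def a_def e_def by simp

lemma a_bounds: "0 \<le> a" "a \<le> e" "e \<le> 1"
  using vb[OF i1 iN] vext_le[OF i1 iN, of "i+1"] vext_bounds[of "i+1"] iN unfolding a_def e_def by auto

lemma a_lt_e: "a < e"
proof (rule ccontr)
  assume "\<not> a < e"
  then have "W = a" unfolding W_eq cond_mean_def by simp
  then show False using gap b0 unfolding W_def a_def by simp
qed

lemma W_bounds: "a \<le> W" "W \<le> e"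
  using cm_bounds[OF pr a_bounds(1) a_bounds(2) a_bounds(3)] unfolding W_eq by auto

lemma s_bounds: "a < s" "s < W - b" "s < e" "0 \<le> s" "s \<le> 1"
  using gap b0 W_bounds a_bounds unfolding s_def W_def a_def by auto

lemma L_props: "0 < mL" "mL * xL = integral {a..s} (\<lambda>t. t * f0 t)" "a \<le> xL" "xL \<le> s"
  using cm_prop[OF pr a_bounds(1) s_bounds(1) s_bounds(5)] unfolding mL_def xL_def by (auto simp: mult.commute)

lemma R_props: "0 < mR" "mR * xR = integral {s..e} (\<lambda>t. t * f0 t)" "s \<le> xR" "xR \<le> e"
  using cm_prop[OF pr s_bounds(4) s_bounds(3) a_bounds(3)] unfolding mR_def xR_def by (auto simp: mult.commute)

lemma m_split: "m = mL + mR"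
  unfolding m_def mL_def mR_def by simp

lemma mW: "m * W = mL * xL + mR * xR"
proof -
  have "m * W = integral {a..e} (\<lambda>t. t * f0 t)"
    using cm_prop(1)[OF pr a_bounds(1) a_lt_e a_bounds(3)] unfolding W_eq m_def by (simp add: mult.commute)
  also have "\<dots> = integral {a..s} (\<lambda>t. t * f0 t) + integral {s..e} (\<lambda>t. t * f0 t)"
    using T_add[OF pr a_bounds(1), of s e] s_bounds a_bounds by simp
  finally show ?thesis using L_props(2) R_props(2) by simp
qed

lemma xL_W: "xL < W - b" "xL \<le> W"
  using L_props(4) s_bounds(2) b0 by auto

lemma W_xR: "W \<le> xR"
proof -
  have "mR * (xR - W) = mL * (W - xL)"
    using mW m_split by (simp add: algebra_simps)
  moreover have "0 \<le> mL * (W - xL)" using L_props(1) xL_W by simp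
  ultimately have "0 \<le> mR * (xR - W)" by simp
  then show ?thesis using R_props(1) by (simp add: zero_le_mult_iff)
qed

lemma Wt_i: "Wt i = m" unfolding Wt_def m_def e_def a_def using i1 by simp
lemma A_i: "A i = W" unfolding A_def W_def using i1 by simp

definition "AH k = (if k = N+1 then xL else if k = N+1+1 then xR else A k)"
definition "WH k = (if k = N+1 then mL else if k = N+1+1 then mR else if k = i then 0 else Wt k)"
definition "H = stepsum (N+1+2) AH WH"

lemma iN1: "i < N+1" using iN by simp

lemma H_eq: "H x = stepsum (N+1) A Wt x - (if W \<le> x then m else 0) + (if xL \<le> x then mL else 0) + (if xR \<le> x then mR else 0)"
  unfolding H_def stepsum_def AH_def WH_def
  using sum_mod[OF iN1, of "\<lambda>a w. if a \<le> x then w else 0" xL xR A mL mR Wt] Wt_i A_i by simp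

lemma WH_sum: "(\<Sum>k<N+1+2. WH k) = 1"
  unfolding WH_def
  using sum_mod[OF iN1, of "\<lambda>a w. w" xL xR A mL mR Wt] Wt_i Wt_sum m_split by simp

lemma WH_nonneg: "\<forall>k<N+1+2. 0 \<le> WH k"
  unfolding WH_def using L_props(1) R_props(1) Wt_nonneg by auto

lemma AH_bounds: "\<forall>k<N+1+2. 0 \<le> AH k \<and> AH k \<le> 1"
  unfolding AH_def using A_bounds L_props R_props a_bounds s_bounds by (auto simp: less_Suc_eq)

lemma H_cdf01: "cdf01 H"
  unfolding H_def by (rule stepsum_cdf01[OF WH_nonneg AH_bounds WH_sum])

lemma int_G:
  assumes "f \<in> borel_measurable borel"
  shows "integral_cdf (G_BHM F0 f0 N v) f = (\<Sum>k<N+1. Wt k * f (A k))"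
  unfolding integral_cdf_def G_eq
  using integral_stepsum[of "N+1" Wt f A] Wt_nonneg Wt_sum assms by simp

lemma int_H:
  assumes "f \<in> borel_measurable borel"
  shows "integral_cdf H f = (\<Sum>k<N+1. Wt k * f (A k)) - m * f W + mL * f xL + mR * f xR"
proof -
  have "integral_cdf H f = (\<Sum>k<N+1+2. WH k * f (AH k))"
    unfolding integral_cdf_def H_def using integral_stepsum[OF _ WH_sum assms] WH_nonneg by simp
  also have "\<dots> = (\<Sum>k<N+1. Wt k * f (A k)) - m * f W + mL * f xL + mR * f xR"
    unfolding WH_def AH_def
    using sum_mod[OF iN1, of "\<lambda>a w. w * f a" xL xR A mL mR Wt] Wt_i A_i by simp
  finally show ?thesis .
qed

end

context pool begin

abbreviation "G \<equiv> stepsum (N+1) A Wt"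

lemma F0_integrable: "F0 integrable_on {lo..x}"
  using F0_cont[OF pr] by (intro integrable_continuous_real) (auto intro: continuous_on_subset)

lemma xpos: "0 \<le> W" "0 \<le> xL" "0 \<le> xR"
  using a_bounds W_bounds L_props R_props s_bounds by auto

lemma PhiH:
  assumes "0 \<le> x"
  shows "integral {0..x} (\<lambda>y. F0 y - H y) = integral {0..x} (\<lambda>y. F0 y - G y)
           + m * max 0 (x - W) - mL * max 0 (x - xL) - mR * max 0 (x - xR)"
proof -
  have i1: "((\<lambda>y. F0 y - G y) has_integral integral {0..x} (\<lambda>y. F0 y - G y)) {0..x}"
    by (intro integrable_integral integrable_diff F0_integrable stepsum_integrable)
  have i2: "((\<lambda>y. if W \<le> y then m else 0) has_integral m * max 0 (x - W)) {0..x}"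
    using step_has_integral[OF assms, of W m] xpos by (simp add: max_def)
  have i3: "((\<lambda>y. if xL \<le> y then mL else 0) has_integral mL * max 0 (x - xL)) {0..x}"
    using step_has_integral[OF assms, of xL mL] xpos by (simp add: max_def)
  have i4: "((\<lambda>y. if xR \<le> y then mR else 0) has_integral mR * max 0 (x - xR)) {0..x}"
    using step_has_integral[OF assms, of xR mR] xpos by (simp add: max_def)
  have "((\<lambda>y. (F0 y - G y) + (if W \<le> y then m else 0) - (if xL \<le> y then mL else 0) - (if xR \<le> y then mR else 0))
     has_integral (integral {0..x} (\<lambda>y. F0 y - G y) + m * max 0 (x - W) - mL * max 0 (x - xL) - mR * max 0 (x - xR))) {0..x}"
    by (intro has_integral_diff has_integral_add i1 i2 i3 i4)
  moreover have "(\<lambda>y. (F0 y - G y) + (if W \<le> y then m else 0) - (if xL \<le> y then mL else 0) - (if xR \<le> y then mR else 0))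
      = (\<lambda>y. F0 y - H y)"
    by (rule ext) (simp add: H_eq)
  ultimately show ?thesis by (simp add: integral_unique)
qed

lemma PhiG_local:
  assumes "a \<le> x" "x < e"
  shows "integral {a..x} (\<lambda>y. F0 y - G y) = x * F0 x - a * F0 a - integral {a..x} (\<lambda>t. t * f0 t) - F0 a * (x - a) - m * max 0 (x - W)"
proof -
  have x1: "x \<le> 1" using assms a_bounds by simp
  have iF: "(F0 has_integral (x * F0 x - a * F0 a - integral {a..x} (\<lambda>t. t * f0 t))) {a..x}"
    using int_F0[OF pr a_bounds(1) assms(1) x1] integrable_integral[OF F0_integrable[of a x]] by simp
  have ic: "((\<lambda>_. F0 a) has_integral F0 a * (x - a)) {a..x}"
    using has_integral_const_real[of "F0 a" a x] assms by (simp add: mult.commute)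
  have ist: "((\<lambda>y. if W \<le> y then m else 0) has_integral m * max 0 (x - W)) {a..x}"
    using step_has_integral[OF assms(1), of W m] W_bounds by (simp add: max_def)
  have "((\<lambda>y. F0 y - (F0 a + (if W \<le> y then m else 0))) has_integral
      (x * F0 x - a * F0 a - integral {a..x} (\<lambda>t. t * f0 t) - (F0 a * (x - a) + m * max 0 (x - W)))) {a..x}"
    by (intro has_integral_diff has_integral_add iF ic ist)
  then have "((\<lambda>y. F0 y - G y) has_integral
      (x * F0 x - a * F0 a - integral {a..x} (\<lambda>t. t * f0 t) - (F0 a * (x - a) + m * max 0 (x - W)))) {a..x}"
  proof (rule has_integral_eq[rotated])
    fix y assume y: "y \<in> {a..x}"
    have "G y = F0 (v i) + (if A i \<le> y then Wt i else 0)"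
      using G_local[OF i1 iN, of y] y assms unfolding a_def e_def by auto
    then show "F0 y - (F0 a + (if W \<le> y then m else 0)) = F0 y - G y"
      using A_i Wt_i a_def by simp
  qed
  then show ?thesis by (simp add: integral_unique)
qed

lemma PhiH_nonneg:
  assumes G: "G \<in> MPC F0"
  shows "0 \<le> integral {0..x} (\<lambda>y. F0 y - H y)"
proof -
  have GM: "\<And>z. 0 \<le> integral {0..z} (\<lambda>y. F0 y - G y)" using G unfolding MPC_def by auto
  show ?thesis
  proof (cases "x < 0")
    case True then show ?thesis by simp
  next
    case False
    then have x0: "0 \<le> x" by simp
    note P = PhiH[OF x0]
    consider "x \<le> xL" | "xR \<le> x" | "xL < x \<and> x < xR" by linarith
    then show ?thesis
    proof cases
      case 1
      then have "max 0 (x - W) = 0" "max 0 (x - xL) = 0" "max 0 (x - xR) = 0"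
        using xL_W W_xR by auto
      then show ?thesis using P GM[of x] by simp
    next
      case 2
      then have "max 0 (x - W) = x - W" "max 0 (x - xL) = x - xL" "max 0 (x - xR) = x - xR"
        using xL_W W_xR by auto
      moreover have "m * (x - W) - mL * (x - xL) - mR * (x - xR) = 0"
        using mW m_split by (simp add: algebra_simps)
      ultimately show ?thesis using P GM[of x] by simp
    next
      case 3
      then have ax: "a \<le> x" "x < e" using L_props R_props by auto
      have x1: "x \<le> 1" using ax a_bounds by simp
      have mx: "max 0 (x - xL) = x - xL" "max 0 (x - xR) = 0" using 3 by auto
      have comb: "integral {0..a} (\<lambda>y. F0 y - G y) + integral {a..x} (\<lambda>y. F0 y - G y) = integral {0..x} (\<lambda>y. F0 y - G y)"
        by (rule Henstock_Kurzweil_Integration.integral_combine) (use ax a_bounds in \<open>auto intro: integrable_diff F0_integrable stepsum_integrable\<close>)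
      define TT where "TT p r = integral {p..r} (\<lambda>t. t * f0 t)" for p r
      have key: "integral {0..x} (\<lambda>y. F0 y - H y) = integral {0..a} (\<lambda>y. F0 y - G y) + (x * F0 x - x * F0 s - TT a x + TT a s)"
      proof -
        have "integral {0..x} (\<lambda>y. F0 y - H y) = integral {0..a} (\<lambda>y. F0 y - G y)
          + (x * F0 x - a * F0 a - TT a x - F0 a * (x - a) - m * max 0 (x - W)) + m * max 0 (x - W) - mL * (x - xL)"
          using P comb PhiG_local[OF ax] mx unfolding TT_def by simp
        moreover have "mL * xL = TT a s" using L_props(2) unfolding TT_def by simp
        ultimately show ?thesis unfolding mL_def by (simp add: algebra_simps)
      qed
      show ?thesis
      proof (cases "x \<le> s")
        case True
        have "TT a x + TT x s = TT a s" unfolding TT_def using T_add[OF pr a_bounds(1) ax(1) True s_bounds(5)] .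
        moreover have "x * (F0 s - F0 x) \<le> TT x s" unfolding TT_def
          using T_bounds(1)[OF pr _ True s_bounds(5)] ax a_bounds by simp
        ultimately have "0 \<le> x * F0 x - x * F0 s - TT a x + TT a s" by (simp add: algebra_simps)
        then show ?thesis using key GM[of a] by simp
      next
        case False
        have "TT a s + TT s x = TT a x" unfolding TT_def using T_add[OF pr a_bounds(1) _ _ x1] s_bounds False by simp
        moreover have "TT s x \<le> x * (F0 x - F0 s)" unfolding TT_def
          using T_bounds(2)[OF pr s_bounds(4) _ x1] False by simp
        ultimately have "0 \<le> x * F0 x - x * F0 s - TT a x + TT a s" by (simp add: algebra_simps)
        then show ?thesis using key GM[of a] by simp
      qed
    qed
  qed
qed

lemma H_MPC:
  assumes G: "G \<in> MPC F0"
  shows "H \<in> MPC F0"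
proof -
  have "integral {0..1} (\<lambda>y. F0 y - G y) = 0" using G unfolding MPC_def by auto
  moreover have "max 0 (1 - W) = 1 - W" "max 0 (1 - xL) = 1 - xL" "max 0 (1 - xR) = 1 - xR"
    using W_bounds xL_W W_xR R_props a_bounds by auto
  moreover have "m * (1 - W) - mL * (1 - xL) - mR * (1 - xR) = 0"
    using mW m_split by (simp add: algebra_simps)
  ultimately have "integral {0..1} (\<lambda>y. F0 y - H y) = 0" using PhiH[of 1] by simp
  then show ?thesis unfolding MPC_def using H_cdf01 PhiH_nonneg[OF G] by auto
qed

end



context pool begin

lemma cp2: "k \<le> N \<Longrightarrow> y * qext q k - price f0 N v q k \<le> y * qext q (choice f0 N v q y) - price f0 N v q (choice f0 N v q y)"
  by (rule choice_props(2))

lemma cp3: "j \<le> N \<Longrightarrow> (\<forall>k\<le>N. y * qext q k - price f0 N v q k \<le> y * qext q j - price f0 N v q j) \<Longrightarrow> j \<le> choice f0 N v q y"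
  by (rule choice_props(3))

lemma gain:
  defines "\<phi> \<equiv> (\<lambda>w. (w + b) * mech_q f0 N v q w - mech_t f0 N v q w)"
  shows "m * \<phi> W < mL * \<phi> xL + mR * \<phi> xR"
proof -
  let ?Q = "qext q" and ?T = "price f0 N v q" and ?C = "choice f0 N v q"
  let ?val = "\<lambda>y k. y * qext q k - price f0 N v q k"
  have qm: "\<And>k. 1 \<le> k \<Longrightarrow> k \<le> N \<Longrightarrow> ?Q (k - 1) \<le> ?Q k"
    using qext_mono[OF q1 qinc] by simp
  have lo: "\<And>k. 1 \<le> k \<Longrightarrow> k < i \<Longrightarrow> wpool f0 N v k \<le> a"
    using wp_le iN unfolding a_def by auto
  have hi: "\<And>k. i \<le> k \<Longrightarrow> k \<le> N \<Longrightarrow> W \<le> wpool f0 N v k"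
    using wp_mono i1 unfolding W_def by auto
  have aW: "a \<le> W" "a \<le> xL" "xL \<le> W" using W_bounds L_props xL_W by auto
  have max_i: "\<And>k. k \<le> N \<Longrightarrow> ?val W k \<le> ?val W i"
    by (rule maximizer[OF iN _ _ qm]) (use lo hi aW W_def in \<open>force+\<close>)
  have max_im1: "\<And>k. k \<le> N \<Longrightarrow> ?val W k \<le> ?val W (i - 1)"
    by (rule maximizer[OF _ _ _ qm]) (use lo hi aW iN i1 in \<open>force+\<close>)
  have hiL: "\<And>k. i - 1 < k \<Longrightarrow> k \<le> N \<Longrightarrow> xL \<le> wpool f0 N v k"
  proof -
    fix k assume k: "i - 1 < k" "k \<le> N"
    then have "i \<le> k" using i1 by linarith
    then show "xL \<le> wpool f0 N v k" using hi[OF _ k(2)] aW(3) by linarith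
  qed
  have max_L: "\<And>k. k \<le> N \<Longrightarrow> ?val xL k \<le> ?val xL (i - 1)"
    by (rule maximizer[OF _ _ _ qm]) (use lo hiL aW iN i1 in \<open>force+\<close>)
  define j0 where "j0 = ?C W"
  define cL where "cL = ?C xL"
  define cR where "cR = ?C xR"
  have j0N: "j0 \<le> N" "cL \<le> N" "cR \<le> N" unfolding j0_def cL_def cR_def using choice_props(1) by auto
  have ij0: "i \<le> j0" unfolding j0_def using cp3[OF iN] max_i by blast
  have tie: "?val W j0 = ?val W (i - 1)"
    using cp2[where k="i - 1" and y=W] max_im1[OF j0N(1)] iN unfolding j0_def by force
  have icL: "i - 1 \<le> cL" unfolding cL_def using cp3[where j="i - 1" and y=xL] max_L iN by force
  have vL: "?val xL (i - 1) \<le> ?val xL cL" unfolding cL_def using cp2[where k="i - 1" and y=xL] iN by force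
  have j0cR: "j0 \<le> cR" unfolding j0_def cR_def using choice_mono[OF q1 qinc W_xR] .
  have vR: "?val xR j0 \<le> ?val xR cR" unfolding cR_def using cp2[OF j0N(1), where y=xR] by force
  have QL: "?Q (i - 1) \<le> ?Q cL" using qext_mono[OF q1 qinc icL j0N(2)] .
  have QR: "?Q j0 \<le> ?Q cR" using qext_mono[OF q1 qinc j0cR j0N(3)] .
  have QP: "?Q (i - 1) < ?Q j0"
    using qext_smono[OF q1 qinc, of "i - 1" i] qext_mono[OF q1 qinc ij0 j0N(1)] i1 iN by simp
  have phi: "\<phi> y = ?val y (?C y) + b * ?Q (?C y)" for y
    unfolding \<phi>_def mech_q_def mech_t_def by (simp add: algebra_simps)
  define P where "P = ?Q (i - 1)"
  define R where "R = ?Q j0"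
  define TP where "TP = ?T (i - 1)"
  define TR where "TR = ?T j0"
  have tie': "W * R - TR = W * P - TP" using tie unfolding P_def R_def TP_def TR_def .
  have phiL: "xL * P - TP + b * P \<le> \<phi> xL"
    using phi[of xL] vL QL b0 unfolding P_def TP_def cL_def[symmetric]
    by (smt (verit) mult_left_mono)
  have phiR: "xR * R - TR + b * R \<le> \<phi> xR"
    using phi[of xR] vR QR b0 unfolding R_def TR_def cR_def[symmetric]
    by (smt (verit) mult_left_mono)
  have phiW: "\<phi> W = W * R - TR + b * R"
    using phi[of W] unfolding R_def TR_def j0_def by simp
  have mRx: "mR * (xR - W) = mL * (W - xL)" using mW m_split by (simp add: algebra_simps)
  have eq: "mL * (xL * P - TP + b * P) + mR * (xR * R - TR + b * R) - m * (W * R - TR + b * R)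
          = mL * ((W - xL - b) * (R - P))"
  proof -
    have "mL * (xL * P - TP + b * P) + mR * (xR * R - TR + b * R) - m * (W * R - TR + b * R)
        = mL * (xL * P - TP + b * P - (W * R - TR + b * R)) + mR * (xR - W) * R"
      using m_split by (simp add: algebra_simps)
    also have "\<dots> = mL * (xL * P - TP + b * P - (W * R - TR + b * R)) + mL * (W - xL) * R"
      using mRx by simp
    also have "\<dots> = mL * ((W - xL - b) * (R - P))"
    proof -
      have htr: "TR = TP + W * R - W * P" using tie' by linarith
      show ?thesis unfolding htr by (simp add: algebra_simps)
    qed
    finally show ?thesis .
  qed
  have pos: "0 < mL * ((W - xL - b) * (R - P))"
    using L_props(1) xL_W(1) QP unfolding P_def R_def by simp
  have "mL * (xL * P - TP + b * P) \<le> mL * \<phi> xL" using phiL L_props(1) by simp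
  moreover have "mR * (xR * R - TR + b * R) \<le> mR * \<phi> xR" using phiR R_props(1) by simp
  moreover have "m * \<phi> W = m * (W * R - TR + b * R)" using phiW by simp
  ultimately show ?thesis using eq pos by linarith
qed

lemma not_IOB: "\<not> I_OB F0 b (mech_q f0 N v q) (mech_t f0 N v q) (G_BHM F0 f0 N v)"
proof
  assume I: "I_OB F0 b (mech_q f0 N v q) (mech_t f0 N v q) (G_BHM F0 f0 N v)"
  let ?\<phi> = "\<lambda>w. (w + b) * mech_q f0 N v q w - mech_t f0 N v q w"
  have GM: "G \<in> MPC F0" using I G_eq unfolding I_OB_def by simp
  have HM: "H \<in> MPC F0" by (rule H_MPC[OF GM])
  have le: "integral_cdf H ?\<phi> \<le> integral_cdf (G_BHM F0 f0 N v) ?\<phi>"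
    using I HM unfolding I_OB_def by blast
  have meas: "?\<phi> \<in> borel_measurable borel" by (rule phi_measurable[OF q1 qinc wp_nonneg])
  have "integral_cdf H ?\<phi> - integral_cdf (G_BHM F0 f0 N v) ?\<phi> = mL * ?\<phi> xL + mR * ?\<phi> xR - m * ?\<phi> W"
    using int_H[OF meas] int_G[OF meas] by simp
  moreover have "m * ?\<phi> W < mL * ?\<phi> xL + mR * ?\<phi> xR" by (rule gain)
  ultimately show False using le by linarith
qed

end

lemma final:
  fixes F0 f0 c :: "real \<Rightarrow> real" and qbar b :: real and N :: nat
    and v q :: "nat \<Rightarrow> real"
  assumes "prior F0 f0"
    and "b \<ge> 0"
    and "N \<ge> 1"
    and "nitem_feasible qbar N v q"
    and "0 < q 1"
    and "\<forall>i\<in>{1..<N}. q i < q (i + 1)"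
    and "b < b_hat f0 N v"
  shows "\<not> I_OB F0 b (mech_q f0 N v q) (mech_t f0 N v q) (G_BHM F0 f0 N v)
       \<and> \<not> monopolist_solution F0 c qbar b (mech_q f0 N v q) (mech_t f0 N v q) (G_BHM F0 f0 N v)"
proof -
  interpret setting F0 f0 N v q
  proof
    show "prior F0 f0" "N \<ge> 1" "0 < q 1" "\<forall>i\<in>{1..<N}. q i < q (i + 1)" using assms by auto
    show "\<And>k. 1 \<le> k \<Longrightarrow> k \<le> N \<Longrightarrow> 0 \<le> v k \<and> v k \<le> 1"
      using assms(4) unfolding nitem_feasible_def by auto
    show "\<And>k. 1 \<le> k \<Longrightarrow> k < N \<Longrightarrow> v k \<le> v (k + 1)"
      using assms(4) unfolding nitem_feasible_def by auto
  qed
  have "b_hat f0 N v \<in> (\<lambda>i. wpool f0 N v i - v i) ` {1..N}"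
    unfolding b_hat_def by (rule Max_in) (use assms(3) in auto)
  then obtain i where i: "i \<in> {1..N}" "b_hat f0 N v = wpool f0 N v i - v i" by auto
  interpret pool F0 f0 N v q b i
    by unfold_locales (use i assms(2,7) in auto)
  have "\<not> I_OB F0 b (mech_q f0 N v q) (mech_t f0 N v q) (G_BHM F0 f0 N v)" by (rule not_IOB)
  then show ?thesis unfolding monopolist_solution_def feasible_def by blast
qed


theorem proposition4:
  fixes F0 f0 c :: "real \<Rightarrow> real" and qbar b :: real and N :: nat
    and v q :: "nat \<Rightarrow> real"
  assumes "prior F0 f0"
    and "cost_fun c"
    and "qbar > 0"
    and "b \<ge> 0"
    and "N \<ge> 1"
    and "nitem_feasible qbar N v q"
    and "\<forall>v' q'. nitem_feasible qbar N v' q' \<longrightarrow>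
           nitem_objective F0 f0 c N v' q' \<le> nitem_objective F0 f0 c N v q"
    and "0 < q 1"
    and "\<forall>i\<in>{1..<N}. q i < q (i + 1)"
    and "b < b_hat f0 N v"
  shows "\<not> I_OB F0 b (mech_q f0 N v q) (mech_t f0 N v q) (G_BHM F0 f0 N v)
       \<and> \<not> monopolist_solution F0 c qbar b (mech_q f0 N v q) (mech_t f0 N v q) (G_BHM F0 f0 N v)"
    using final[OF assms(1) assms(4) assms(5) assms(6) assms(8) assms(9) assms(10)] by blast

end
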